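(* Let $H$ be a graph and let $v_1,\dots,v_k$ be mutually distinct vertices of $H$. Then $\sigma=(v_1,\dots,v_k)$ is an lc-sequence for the set system $\mathcal{D}_H$ if and only if $\varphi=*_c v_1 *_c v_2\cdots *_c v_k$ is an lc-sequence for $H$. Moreover, in this case, $\sigma$ is full if and only if $\varphi$ is full.
   Context: Graphs are finite, may have loops, but no multiple edges. A vertex is isolated if no edge (including a loop) is incident to it. For $v\in V(H)$, $N_H(v)=\{u\neq v: \{u,v\}\in E(H)\}$. For a looped vertex $v$, the local complement $H*v$ is the graph on $V(H)$ such that for every $p\subseteq V(H)$ with $|p|\in\{1,2\}$: $p\in E(H*v)$ iff either ($p\notin E(H)$ and $p\subseteq N_H(v)$) or ($p\in E(H)$ and $p\not\subseteq N_H(v)$). $H*_c v$ (only for looped $v$) is obtained from $H*v$ by removing all edges incident to $v$, including its loop. $\varphi=*_c v_1\cdots *_c v_k$ (applied left to right) is an lc-sequence for $H$ if $v_i$ is looped in $H*_c v_1\cdots*_c v_{i-1}$ for every $i$; it is full if $H\varphi$ consists only of isolated vertices. The adjacency matrix $A(H)$ is over $GF(2)$ with diagonal entry $1$ exactly at looped vertices; $H[X]$ is the induced subgraph on $X$. $\mathcal{D}_H=(V(H),S)$ with $X\in S$ iff $A(H[X])$ is invertible (the empty matrix counts as invertible). For a set system $D=(V,S)$, a sequence $(v_1,\dots,v_k)$ of mutually distinct elements of $V$ is an lc-sequence for $D$ if $\{v_1,\dots,v_i\}\in S$ for all $i\in\{0,\dots,k\}$; it is full if moreover $\{v_1,\dots,v_k\}$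 is an inclusion-maximal element of $S$. *)

theory Defs
  imports Main "HOL-Library.Z2"
begin

text \<open>A graph (loops allowed, no multiple edges) is given by a finite vertex set V and
an edge set E of subsets of V of cardinality 1 (loops) or 2.\<close>

definition is_graph :: "'a set \<Rightarrow> 'a set set \<Rightarrow> bool" where
  "is_graph V E \<longleftrightarrow> finite V \<and> (\<forall>e\<in>E. e \<subseteq> V \<and> (card e = 1 \<or> card e = 2))"

definition nbhd :: "'a set set \<Rightarrow> 'a \<Rightarrow> 'a set" where
  "nbhd E v = {u. u \<noteq> v \<and> {u, v} \<in> E}"

definition looped :: "'a set set \<Rightarrow> 'a \<Rightarrow> bool" where
  "looped E v \<longleftrightarrow> {v} \<in> E"

definition local_compl :: "'a set \<Rightarrow> 'a set set \<Rightarrow> 'a \<Rightarrow> 'a set set" where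
  "local_compl V E v = {p. p \<subseteq> V \<and> (card p = 1 \<or> card p = 2) \<and>
     ((p \<notin> E \<and> p \<subseteq> nbhd E v) \<or> (p \<in> E \<and> \<not> p \<subseteq> nbhd E v))}"

definition local_compl_c :: "'a set \<Rightarrow> 'a set set \<Rightarrow> 'a \<Rightarrow> 'a set set" where
  "local_compl_c V E v = {p \<in> local_compl V E v. v \<notin> p}"

fun apply_lcc :: "'a set \<Rightarrow> 'a set set \<Rightarrow> 'a list \<Rightarrow> 'a set set" where
  "apply_lcc V E [] = E"
| "apply_lcc V E (v # vs) = apply_lcc V (local_compl_c V E v) vs"

fun is_lc_seq_graph :: "'a set \<Rightarrow> 'a set set \<Rightarrow> 'a list \<Rightarrow> bool" where
  "is_lc_seq_graph V E [] = True"
| "is_lc_seq_graph V E (v # vs) \<longleftrightarrow> looped E v \<and> is_lc_seq_graph V (local_compl_c V E v) vs"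

definition full_lc_seq_graph :: "'a set \<Rightarrow> 'a set set \<Rightarrow> 'a list \<Rightarrow> bool" where
  "full_lc_seq_graph V E vs \<longleftrightarrow> is_lc_seq_graph V E vs \<and>
     (\<forall>u\<in>V. \<forall>e\<in>apply_lcc V E vs. u \<notin> e)"

definition adj :: "'a set set \<Rightarrow> 'a \<Rightarrow> 'a \<Rightarrow> bit" where
  "adj E x y = (if {x, y} \<in> E then 1 else 0)"

text \<open>A square matrix indexed by the finite set X is invertible if it has a two-sided inverse
(the empty matrix is invertible).\<close>
definition invertible_on :: "'a set \<Rightarrow> ('a \<Rightarrow> 'a \<Rightarrow> 'f::field) \<Rightarrow> bool" where
  "invertible_on X A \<longleftrightarrow> (\<exists>B. \<forall>i\<in>X. \<forall>j\<in>X.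
      (\<Sum>k\<in>X. A i k * B k j) = (if i = j then 1 else 0) \<and>
      (\<Sum>k\<in>X. B i k * A k j) = (if i = j then 1 else 0))"

text \<open>The set system D_H = (V, S): S = {X \<subseteq> V. A(H[X]) invertible}.
  A(H[X]) is the restriction of adj E to X \<times> X.\<close>
definition DH_sets :: "'a set \<Rightarrow> 'a set set \<Rightarrow> 'a set set" where
  "DH_sets V E = {X. X \<subseteq> V \<and> invertible_on X (adj E)}"

definition is_lc_seq_sys :: "'a set \<Rightarrow> 'a set set \<Rightarrow> 'a list \<Rightarrow> bool" where
  "is_lc_seq_sys V S vs \<longleftrightarrow> distinct vs \<and> set vs \<subseteq> V \<and>
     (\<forall>i\<le>length vs. set (take i vs) \<in> S)"

definition full_lc_seq_sys :: "'a set \<Rightarrow> 'a set set \<Rightarrow> 'a list \<Rightarrow> bool" where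
  "full_lc_seq_sys V S vs \<longleftrightarrow> is_lc_seq_sys V S vs \<and>
     set vs \<in> S \<and> (\<forall>Y\<in>S. set vs \<subseteq> Y \<longrightarrow> Y = set vs)"

end

theory Submission
  imports Defs
begin

lemma swap3:
  fixes P :: "'a \<Rightarrow> 'f::comm_ring_1"
  shows "(\<Sum>k\<in>Y. P k * (\<Sum>l\<in>Y. Q k l * R l)) = (\<Sum>l\<in>Y. (\<Sum>k\<in>Y. P k * Q k l) * R l)"
proof -
  have "(\<Sum>k\<in>Y. P k * (\<Sum>l\<in>Y. Q k l * R l)) = (\<Sum>k\<in>Y. \<Sum>l\<in>Y. P k * (Q k l * R l))"
    by (simp add: sum_distrib_left)
  also have "\<dots> = (\<Sum>l\<in>Y. \<Sum>k\<in>Y. P k * (Q k l * R l))"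
    by (rule sum.swap)
  also have "\<dots> = (\<Sum>l\<in>Y. (\<Sum>k\<in>Y. P k * Q k l) * R l)"
    by (simp add: sum_distrib_right mult.assoc)
  finally show ?thesis .
qed

lemma delta_sum_r:
  fixes f :: "'a \<Rightarrow> 'f::comm_ring_1"
  assumes "finite Y" "j \<in> Y"
  shows "(\<Sum>l\<in>Y. f l * (if l = j then 1 else 0)) = f j"
  using assms by (simp add: if_distrib cong: if_cong)

lemma delta_sum_l:
  fixes f :: "'a \<Rightarrow> 'f::comm_ring_1"
  assumes "finite Y" "i \<in> Y"
  shows "(\<Sum>l\<in>Y. (if i = l then 1 else 0) * f l) = f i"
  using delta_sum_r[OF assms, of f] by (simp add: mult.commute eq_commute)

lemma inv_cong:
  assumes "\<And>i j. i \<in> X \<Longrightarrow> j \<in> X \<Longrightarrow> A i j = A' i j"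
  shows "invertible_on X A \<longleftrightarrow> invertible_on X A'"
  unfolding invertible_on_def using assms by (simp cong: sum.cong)

lemma schur_fwd:
  fixes A :: "'a \<Rightarrow> 'a \<Rightarrow> 'f::field"
  assumes fin: "finite Y" and v: "v \<notin> Y" and a: "A v v = 1"
    and inv: "invertible_on (insert v Y) A"
  shows "invertible_on Y (\<lambda>i j. A i j - A i v * A v j)"
proof -
  from inv obtain B where B: "\<And>i j. i \<in> insert v Y \<Longrightarrow> j \<in> insert v Y \<Longrightarrow>
      (\<Sum>k\<in>insert v Y. A i k * B k j) = (if i = j then 1 else 0) \<and>
      (\<Sum>k\<in>insert v Y. B i k * A k j) = (if i = j then 1 else 0)"
    unfolding invertible_on_def by blast
  have s: "(\<Sum>k\<in>insert v Y. f k) = f v + (\<Sum>k\<in>Y. f k)" for f :: "'a \<Rightarrow> 'f"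
    using fin v by simp
  show ?thesis unfolding invertible_on_def
  proof (rule exI[of _ B], intro ballI conjI)
    fix i j assume i: "i \<in> Y" and j: "j \<in> Y"
    have h1: "A i v * B v j + (\<Sum>k\<in>Y. A i k * B k j) = (if i = j then 1 else 0)"
      using B[of i j] i j s by auto
    have h2: "A v v * B v j + (\<Sum>k\<in>Y. A v k * B k j) = 0"
      using B[of v j] j v s by auto
    have "(\<Sum>k\<in>Y. (A i k - A i v * A v k) * B k j)
        = (\<Sum>k\<in>Y. A i k * B k j) - A i v * (\<Sum>k\<in>Y. A v k * B k j)"
      by (simp add: sum_subtractf sum_distrib_left algebra_simps)
    moreover have "(\<Sum>k\<in>Y. A v k * B k j) = - B v j"
      using h2 a by (simp add: eq_neg_iff_add_eq_0 add.commute)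
    moreover have "(\<Sum>k\<in>Y. A i k * B k j) = (if i = j then 1 else 0) - A i v * B v j"
      using h1 by (simp add: eq_diff_eq add.commute)
    ultimately show "(\<Sum>k\<in>Y. (A i k - A i v * A v k) * B k j) = (if i = j then 1 else 0)"
      by simp
  next
    fix i j assume i: "i \<in> Y" and j: "j \<in> Y"
    have h1: "B i v * A v j + (\<Sum>k\<in>Y. B i k * A k j) = (if i = j then 1 else 0)"
      using B[of i j] i j s by auto
    have h2: "B i v * A v v + (\<Sum>k\<in>Y. B i k * A k v) = 0"
      using B[of i v] i v s by auto
    have "(\<Sum>k\<in>Y. B i k * (A k j - A k v * A v j))
        = (\<Sum>k\<in>Y. B i k * A k j) - (\<Sum>k\<in>Y. B i k * A k v) * A v j"
      by (simp add: right_diff_distrib sum_subtractf sum_distrib_right mult.assoc)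
    moreover have "(\<Sum>k\<in>Y. B i k * A k v) = - B i v"
      using h2 a by (simp add: eq_neg_iff_add_eq_0 add.commute)
    moreover have "(\<Sum>k\<in>Y. B i k * A k j) = (if i = j then 1 else 0) - B i v * A v j"
      using h1 by (simp add: eq_diff_eq add.commute)
    ultimately show "(\<Sum>k\<in>Y. B i k * (A k j - A k v * A v j)) = (if i = j then 1 else 0)"
      by simp
  qed
qed

lemma schur_bwd:
  fixes A :: "'a \<Rightarrow> 'a \<Rightarrow> 'f::field"
  assumes fin: "finite Y" and v: "v \<notin> Y" and a: "A v v = 1"
    and inv: "invertible_on Y (\<lambda>i j. A i j - A i v * A v j)"
  shows "invertible_on (insert v Y) A"
proof -
  from inv obtain T where T: "\<And>i j. i \<in> Y \<Longrightarrow> j \<in> Y \<Longrightarrow>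
      (\<Sum>k\<in>Y. (A i k - A i v * A v k) * T k j) = (if i = j then 1 else 0) \<and>
      (\<Sum>k\<in>Y. T i k * (A k j - A k v * A v j)) = (if i = j then 1 else 0)"
    unfolding invertible_on_def by blast
  have s: "(\<Sum>k\<in>insert v Y. f k) = f v + (\<Sum>k\<in>Y. f k)" for f :: "'a \<Rightarrow> 'f"
    using fin v by simp
  define rT where "rT j = (\<Sum>k\<in>Y. A v k * T k j)" for j
  define Tc where "Tc i = (\<Sum>l\<in>Y. T i l * A l v)" for i
  define rTc where "rTc = (\<Sum>k\<in>Y. A v k * Tc k)"
  have rTc2: "(\<Sum>l\<in>Y. rT l * A l v) = rTc"
    unfolding rTc_def Tc_def rT_def by (rule swap3[symmetric])
  have AT: "(\<Sum>k\<in>Y. A i k * T k l) = (if i = l then 1 else 0) + A i v * rT l"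
    if "i \<in> Y" "l \<in> Y" for i l
  proof -
    have "(\<Sum>k\<in>Y. (A i k - A i v * A v k) * T k l)
        = (\<Sum>k\<in>Y. A i k * T k l) - A i v * rT l"
      unfolding rT_def by (simp add: sum_subtractf sum_distrib_left algebra_simps)
    then show ?thesis using T[OF that] by (simp add: algebra_simps)
  qed
  have TA: "(\<Sum>k\<in>Y. T l k * A k j) = (if l = j then 1 else 0) + Tc l * A v j"
    if "l \<in> Y" "j \<in> Y" for l j
  proof -
    have "(\<Sum>k\<in>Y. T l k * (A k j - A k v * A v j))
        = (\<Sum>k\<in>Y. T l k * A k j) - Tc l * A v j"
      unfolding Tc_def by (simp add: sum_subtractf sum_distrib_right sum_distrib_left algebra_simps)
    then show ?thesis using T[OF that] by (simp add: algebra_simps)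
  qed
  define B where "B i j = (if i = v then (if j = v then 1 + rTc else - rT j)
     else (if j = v then - Tc i else T i j))" for i j
  have Bvv: "B v v = 1 + rTc" by (simp add: B_def)
  have Bvj: "j \<in> Y \<Longrightarrow> B v j = - rT j" for j using v by (auto simp: B_def)
  have Biv: "i \<in> Y \<Longrightarrow> B i v = - Tc i" for i using v by (auto simp: B_def)
  have Bij: "i \<in> Y \<Longrightarrow> j \<in> Y \<Longrightarrow> B i j = T i j" for i j using v by (auto simp: B_def)
  have colv: "(\<Sum>k\<in>Y. P k * B k v) = - (\<Sum>k\<in>Y. P k * Tc k)" for P
    using Biv by (simp add: sum_negf[symmetric] cong: sum.cong)
  have colj: "j \<in> Y \<Longrightarrow> (\<Sum>k\<in>Y. P k * B k j) = (\<Sum>k\<in>Y. P k * T k j)" for P j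
    using Bij by (simp cong: sum.cong)
  have rowv: "(\<Sum>k\<in>Y. B v k * P k) = - (\<Sum>k\<in>Y. rT k * P k)" for P
    using Bvj by (simp add: sum_negf[symmetric] cong: sum.cong)
  have rowi: "i \<in> Y \<Longrightarrow> (\<Sum>k\<in>Y. B i k * P k) = (\<Sum>k\<in>Y. T i k * P k)" for P i
    using Bij by (simp cong: sum.cong)
  have AB1: "(\<Sum>k\<in>insert v Y. A v k * B k v) = 1"
  proof -
    have "(\<Sum>k\<in>insert v Y. A v k * B k v) = A v v * B v v + - (\<Sum>k\<in>Y. A v k * Tc k)"
      by (simp only: s colv)
    then show ?thesis using a Bvv unfolding rTc_def by simp
  qed
  have AB2: "(\<Sum>k\<in>insert v Y. A v k * B k j) = 0" if jY: "j \<in> Y" for j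
  proof -
    have "(\<Sum>k\<in>insert v Y. A v k * B k j) = A v v * B v j + (\<Sum>k\<in>Y. A v k * T k j)"
      by (simp only: s colj[OF jY])
    then show ?thesis using a Bvj[OF jY] unfolding rT_def by simp
  qed
  have AB3: "(\<Sum>k\<in>insert v Y. A i k * B k v) = 0" if iY: "i \<in> Y" for i
  proof -
    have "(\<Sum>k\<in>Y. A i k * Tc k) = (\<Sum>l\<in>Y. (\<Sum>k\<in>Y. A i k * T k l) * A l v)"
      unfolding Tc_def by (rule swap3)
    also have "\<dots> = (\<Sum>l\<in>Y. ((if i = l then 1 else 0) + A i v * rT l) * A l v)"
      using AT iY by (simp cong: sum.cong)
    also have "\<dots> = (\<Sum>l\<in>Y. (if i = l then 1 else 0) * A l v) + (\<Sum>l\<in>Y. A i v * (rT l * A l v))"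
      by (simp add: distrib_right sum.distrib mult.assoc)
    also have "\<dots> = A i v + A i v * rTc"
      using iY fin rTc2 delta_sum_l[OF fin iY, of "\<lambda>l. A l v"] by (simp add: sum_distrib_left[symmetric])
    finally have X: "(\<Sum>k\<in>Y. A i k * Tc k) = A i v + A i v * rTc" .
    have "(\<Sum>k\<in>insert v Y. A i k * B k v) = A i v * B v v + - (\<Sum>k\<in>Y. A i k * Tc k)"
      by (simp only: s colv)
    then show ?thesis using X Bvv by (simp add: algebra_simps)
  qed
  have AB4: "(\<Sum>k\<in>insert v Y. A i k * B k j) = (if i = j then 1 else 0)" if iY: "i \<in> Y" and jY: "j \<in> Y" for i j
  proof -
    have "(\<Sum>k\<in>insert v Y. A i k * B k j) = A i v * B v j + (\<Sum>k\<in>Y. A i k * T k j)"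
      by (simp only: s colj[OF jY])
    then show ?thesis using AT[OF iY jY] Bvj[OF jY] by (simp add: algebra_simps)
  qed
  have BA1: "(\<Sum>k\<in>insert v Y. B v k * A k v) = 1"
  proof -
    have "(\<Sum>k\<in>insert v Y. B v k * A k v) = B v v * A v v + - (\<Sum>k\<in>Y. rT k * A k v)"
      by (simp only: s rowv)
    then show ?thesis using a Bvv rTc2 by simp
  qed
  have BA2: "(\<Sum>k\<in>insert v Y. B i k * A k v) = 0" if iY: "i \<in> Y" for i
  proof -
    have "(\<Sum>k\<in>insert v Y. B i k * A k v) = B i v * A v v + (\<Sum>k\<in>Y. T i k * A k v)"
      by (simp only: s rowi[OF iY])
    then show ?thesis using a Biv[OF iY] unfolding Tc_def by simp
  qed
  have BA3: "(\<Sum>k\<in>insert v Y. B v k * A k j) = 0" if jY: "j \<in> Y" for j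
  proof -
    have "(\<Sum>k\<in>Y. rT k * A k j) = (\<Sum>l\<in>Y. A v l * (\<Sum>k\<in>Y. T l k * A k j))"
      unfolding rT_def by (rule swap3[symmetric])
    also have "\<dots> = (\<Sum>l\<in>Y. A v l * ((if l = j then 1 else 0) + Tc l * A v j))"
      using TA jY by (simp cong: sum.cong)
    also have "\<dots> = (\<Sum>l\<in>Y. A v l * (if l = j then 1 else 0)) + (\<Sum>l\<in>Y. (A v l * Tc l) * A v j)"
      by (simp add: distrib_left sum.distrib mult.assoc)
    also have "\<dots> = A v j + rTc * A v j"
      using jY fin delta_sum_r[OF fin jY, of "\<lambda>l. A v l"] unfolding rTc_def by (simp add: sum_distrib_right[symmetric])
    finally have X: "(\<Sum>k\<in>Y. rT k * A k j) = A v j + rTc * A v j" .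
    have "(\<Sum>k\<in>insert v Y. B v k * A k j) = B v v * A v j + - (\<Sum>k\<in>Y. rT k * A k j)"
      by (simp only: s rowv)
    then show ?thesis using X Bvv by (simp add: algebra_simps)
  qed
  have BA4: "(\<Sum>k\<in>insert v Y. B i k * A k j) = (if i = j then 1 else 0)" if iY: "i \<in> Y" and jY: "j \<in> Y" for i j
  proof -
    have "(\<Sum>k\<in>insert v Y. B i k * A k j) = B i v * A v j + (\<Sum>k\<in>Y. T i k * A k j)"
      by (simp only: s rowi[OF iY])
    then show ?thesis using TA[OF iY jY] Biv[OF iY] by (simp add: algebra_simps)
  qed
  show ?thesis unfolding invertible_on_def
  proof (rule exI[of _ B], intro ballI conjI)
    fix i j assume i: "i \<in> insert v Y" and j: "j \<in> insert v Y"
    show "(\<Sum>k\<in>insert v Y. A i k * B k j) = (if i = j then 1 else 0)"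
    proof (cases "i = v")
      case True
      then show ?thesis using j AB1 AB2 by (cases "j = v") auto
    next
      case False
      then have "i \<in> Y" using i by auto
      then show ?thesis using j AB3 AB4 False by (cases "j = v") auto
    qed
    show "(\<Sum>k\<in>insert v Y. B i k * A k j) = (if i = j then 1 else 0)"
    proof (cases "i = v")
      case True
      then show ?thesis using j BA1 BA3 v by (cases "j = v") auto
    next
      case False
      then have "i \<in> Y" using i by auto
      then show ?thesis using j BA2 BA4 False by (cases "j = v") auto
    qed
  qed
qed

lemma schur:
  fixes A :: "'a \<Rightarrow> 'a \<Rightarrow> 'f::field"
  assumes "finite Y" and "v \<notin> Y" and "A v v = 1"
  shows "invertible_on (insert v Y) A \<longleftrightarrow> invertible_on Y (\<lambda>i j. A i j - A i v * A v j)"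
proof
  assume "invertible_on (insert v Y) A"
  then show "invertible_on Y (\<lambda>i j. A i j - A i v * A v j)" by (rule schur_fwd[of Y v A, OF assms])
next
  assume "invertible_on Y (\<lambda>i j. A i j - A i v * A v j)"
  then show "invertible_on (insert v Y) A" by (rule schur_bwd[of Y v A, OF assms])
qed


lemma inv_empty: "invertible_on {} A"
  unfolding invertible_on_def by simp

lemma inv_single: "invertible_on {x} (A :: 'a \<Rightarrow> 'a \<Rightarrow> 'f::field) \<longleftrightarrow> A x x \<noteq> 0"
proof
  assume "invertible_on {x} A"
  then obtain B where "A x x * B x x = 1" unfolding invertible_on_def by auto
  then show "A x x \<noteq> 0" by auto
next
  assume "A x x \<noteq> 0"
  then show "invertible_on {x} A" unfolding invertible_on_def
    by (intro exI[of _ "\<lambda>_ _. inverse (A x x)"]) simp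
qed

lemma adj_loop: "adj E v v = 1 \<longleftrightarrow> looped E v"
  by (simp add: adj_def looped_def)

lemma adj_sym: "adj E x y = adj E y x"
  by (simp add: adj_def insert_commute)

lemma is_graph_lcc: "is_graph V E \<Longrightarrow> is_graph V (local_compl_c V E v)"
  unfolding is_graph_def local_compl_c_def local_compl_def by auto

lemma adj_lcc:
  assumes g: "is_graph V E" and x: "x \<noteq> v" and y: "y \<noteq> v"
  shows "adj (local_compl_c V E v) x y = adj E x y - adj E x v * adj E v y"
proof -
  have card: "card {x, y} = 1 \<or> card {x, y} = 2" by (cases "x = y") auto
  have N: "{x, y} \<subseteq> nbhd E v \<longleftrightarrow> {x, v} \<in> E \<and> {v, y} \<in> E"
    using x y by (auto simp: nbhd_def insert_commute)
  have inE: "{x, y} \<in> E \<Longrightarrow> {x, y} \<subseteq> V" using g unfolding is_graph_def by auto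
  have xvV: "{x, v} \<in> E \<Longrightarrow> x \<in> V" using g unfolding is_graph_def by auto
  have vyV: "{v, y} \<in> E \<Longrightarrow> y \<in> V" using g unfolding is_graph_def by auto
  have mem: "{x, y} \<in> local_compl_c V E v \<longleftrightarrow> (({x, y} \<in> E) \<noteq> ({x, v} \<in> E \<and> {v, y} \<in> E))"
    unfolding local_compl_c_def local_compl_def using card N inE xvV vyV x y by auto
  show ?thesis unfolding adj_def mem by auto
qed

lemma lc_char:
  assumes "is_graph V E" "distinct vs" "set vs \<subseteq> V"
  shows "is_lc_seq_graph V E vs \<longleftrightarrow> (\<forall>i\<le>length vs. invertible_on (set (take i vs)) (adj E))"
  using assms
proof (induction vs arbitrary: E)
  case Nil
  then show ?case by (simp add: inv_empty)
next
  case (Cons v ws)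
  let ?E' = "local_compl_c V E v"
  have g': "is_graph V ?E'" by (rule is_graph_lcc[OF Cons.prems(1)])
  have d: "distinct ws" using Cons.prems(2) by simp
  have sV: "set ws \<subseteq> V" using Cons.prems(3) by simp
  have IH: "is_lc_seq_graph V ?E' ws \<longleftrightarrow> (\<forall>i\<le>length ws. invertible_on (set (take i ws)) (adj ?E'))"
    by (rule Cons.IH[OF g' d sV])
  have split: "(\<forall>i\<le>length (v # ws). invertible_on (set (take i (v # ws))) (adj E))
      \<longleftrightarrow> (\<forall>j\<le>length ws. invertible_on (insert v (set (take j ws))) (adj E))"
  proof
    assume H: "\<forall>i\<le>length (v # ws). invertible_on (set (take i (v # ws))) (adj E)"
    show "\<forall>j\<le>length ws. invertible_on (insert v (set (take j ws))) (adj E)"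
    proof (intro allI impI)
      fix j assume "j \<le> length ws"
      then show "invertible_on (insert v (set (take j ws))) (adj E)"
        using H[rule_format, of "Suc j"] by simp
    qed
  next
    assume H: "\<forall>j\<le>length ws. invertible_on (insert v (set (take j ws))) (adj E)"
    show "\<forall>i\<le>length (v # ws). invertible_on (set (take i (v # ws))) (adj E)"
    proof (intro allI impI)
      fix i assume i: "i \<le> length (v # ws)"
      show "invertible_on (set (take i (v # ws))) (adj E)"
      proof (cases i)
        case 0 then show ?thesis by (simp add: inv_empty)
      next
        case (Suc j) then show ?thesis using H i by simp
      qed
    qed
  qed
  show ?case
  proof (cases "looped E v")
    case False
    have "\<not> invertible_on {v} (adj E)"
      using False adj_loop[of E v] by (simp add: inv_single)
    moreover have "insert v (set (take 0 ws)) = {v}" by simp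
    ultimately have "\<not> (\<forall>j\<le>length ws. invertible_on (insert v (set (take j ws))) (adj E))"
      by (metis le0)
    moreover have "\<not> is_lc_seq_graph V E (v # ws)" using False by simp
    ultimately show ?thesis unfolding split by blast
  next
    case True
    have a: "adj E v v = 1" using True adj_loop[of E v] by simp
    have step: "invertible_on (insert v (set (take j ws))) (adj E) \<longleftrightarrow> invertible_on (set (take j ws)) (adj ?E')" for j
    proof -
      have vn: "v \<notin> set (take j ws)" using Cons.prems(2) by (auto dest: in_set_takeD)
      have "invertible_on (insert v (set (take j ws))) (adj E) \<longleftrightarrow>
          invertible_on (set (take j ws)) (\<lambda>i k. adj E i k - adj E i v * adj E v k)"
        by (rule schur[of "set (take j ws)" v "adj E", OF finite_set vn a])
      also have "\<dots> \<longleftrightarrow> invertible_on (set (take j ws)) (adj ?E')"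
        proof (rule inv_cong)
        fix i k assume "i \<in> set (take j ws)" "k \<in> set (take j ws)"
        then have "i \<noteq> v" "k \<noteq> v" using vn by auto
        then show "adj E i k - adj E i v * adj E v k = adj ?E' i k"
          using adj_lcc[OF Cons.prems(1)] by metis
      qed
      finally show ?thesis .
    qed
    have "is_lc_seq_graph V E (v # ws) \<longleftrightarrow> is_lc_seq_graph V ?E' ws" using True by simp
    also have "\<dots> \<longleftrightarrow> (\<forall>j\<le>length ws. invertible_on (insert v (set (take j ws))) (adj E))"
      unfolding IH step ..
    finally show ?thesis unfolding split .
  qed
qed

lemma lcc_main:
  assumes "is_graph V E" "distinct vs" "set vs \<subseteq> V" "is_lc_seq_graph V E vs"
    "X \<subseteq> V" "X \<inter> set vs = {}"
  shows "invertible_on (X \<union> set vs) (adj E) \<longleftrightarrow> invertible_on X (adj (apply_lcc V E vs))"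
  using assms
proof (induction vs arbitrary: E)
  case Nil
  then show ?case by simp
next
  case (Cons v ws)
  let ?E' = "local_compl_c V E v"
  have g': "is_graph V ?E'" by (rule is_graph_lcc[OF Cons.prems(1)])
  have a: "adj E v v = 1" using Cons.prems(4) adj_loop[of E v] by simp
  have vn: "v \<notin> X \<union> set ws" using Cons.prems by auto
  have fin: "finite (X \<union> set ws)" using Cons.prems(1,3,5) unfolding is_graph_def
    by (meson finite_Un finite_set rev_finite_subset)
  have "invertible_on (X \<union> set (v # ws)) (adj E) \<longleftrightarrow> invertible_on (insert v (X \<union> set ws)) (adj E)"
    by simp
  also have "\<dots> \<longleftrightarrow> invertible_on (X \<union> set ws) (\<lambda>i k. adj E i k - adj E i v * adj E v k)"
    by (rule schur[of "X \<union> set ws" v "adj E", OF fin vn a])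
  also have "\<dots> \<longleftrightarrow> invertible_on (X \<union> set ws) (adj ?E')"
  proof (rule inv_cong)
    fix i k assume "i \<in> X \<union> set ws" "k \<in> X \<union> set ws"
    then have "i \<noteq> v" "k \<noteq> v" using vn by auto
    then show "adj E i k - adj E i v * adj E v k = adj ?E' i k"
      using adj_lcc[OF Cons.prems(1)] by metis
  qed
  also have "\<dots> \<longleftrightarrow> invertible_on X (adj (apply_lcc V ?E' ws))"
    by (rule Cons.IH[OF g']) (use Cons.prems in auto)
  finally show ?case by simp
qed

lemma iso_lcc: "\<forall>e\<in>E. u \<notin> e \<Longrightarrow> \<forall>e\<in>local_compl_c V E w. u \<notin> e"
  unfolding local_compl_c_def local_compl_def nbhd_def by auto

lemma iso_apply: "\<forall>e\<in>E. u \<notin> e \<Longrightarrow> \<forall>e\<in>apply_lcc V E vs. u \<notin> e"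
proof (induction vs arbitrary: E)
  case Nil then show ?case by simp
next
  case (Cons a vs)
  have "\<forall>e\<in>local_compl_c V E a. u \<notin> e" by (rule iso_lcc[OF Cons.prems])
  then show ?case using Cons.IH by simp
qed

lemma iso_seq: "u \<in> set vs \<Longrightarrow> \<forall>e\<in>apply_lcc V E vs. u \<notin> e"
proof (induction vs arbitrary: E)
  case Nil then show ?case by simp
next
  case (Cons a vs)
  show ?case
  proof (cases "u = a")
    case True
    have "\<forall>e\<in>local_compl_c V E a. u \<notin> e" using True unfolding local_compl_c_def by auto
    then show ?thesis using iso_apply[of "local_compl_c V E a" u V vs] by simp
  next
    case False
    then show ?thesis using Cons by simp
  qed
qed

lemma is_graph_apply: "is_graph V E \<Longrightarrow> is_graph V (apply_lcc V E vs)"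
  by (induction vs arbitrary: E) (simp_all add: is_graph_lcc)


lemma edge_inv:
  assumes g: "is_graph V F" and e: "e \<in> F"
  shows "\<exists>X. X \<noteq> {} \<and> X \<subseteq> e \<and> invertible_on X (adj F)"
proof (cases "\<exists>x\<in>e. {x} \<in> F")
  case True
  then obtain x where x: "x \<in> e" "{x} \<in> F" by blast
  have "adj F x x = 1" using x by (simp add: adj_def)
  then have "invertible_on {x} (adj F)" by (simp add: inv_single)
  then show ?thesis using x by (intro exI[of _ "{x}"]) simp
next
  case False
  have c: "card e = 1 \<or> card e = 2" using g e unfolding is_graph_def by blast
  show ?thesis
  proof (cases "card e = 1")
    case True
    then obtain x where "e = {x}" by (auto simp: card_1_singleton_iff)
    then show ?thesis using False e by auto
  next
    case c2: False
    then have "card e = 2" using c by simp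
    then obtain x y where xy: "e = {x, y}" "x \<noteq> y" by (auto simp: card_2_iff)
    have nx: "{x} \<notin> F" "{y} \<notin> F" using False xy by auto
    have a1: "adj F x x = 0" "adj F y y = 0" using nx by (simp_all add: adj_def)
    have a2: "adj F x y = 1" "adj F y x = 1" using e xy by (simp_all add: adj_def insert_commute)
    have "invertible_on {x, y} (adj F)" unfolding invertible_on_def
      by (rule exI[of _ "adj F"]) (use a1 a2 xy(2) in auto)
    then show ?thesis using xy by (intro exI[of _ "{x, y}"]) simp
  qed
qed

theorem mainTheorem8:
  fixes V :: "'a set" and E :: "'a set set" and vs :: "'a list"
  assumes "is_graph V E"
    and "distinct vs"
    and "set vs \<subseteq> V"
  shows "(is_lc_seq_sys V (DH_sets V E) vs \<longleftrightarrow> is_lc_seq_graph V E vs)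
    \<and> (is_lc_seq_graph V E vs \<longrightarrow>
         (full_lc_seq_sys V (DH_sets V E) vs \<longleftrightarrow> full_lc_seq_graph V E vs))"
proof -
  note g = assms(1) and d = assms(2) and sV = assms(3)
  have tk: "set (take i vs) \<subseteq> V" for i using sV set_take_subset by fastforce
  have P1: "is_lc_seq_sys V (DH_sets V E) vs \<longleftrightarrow> is_lc_seq_graph V E vs"
    unfolding is_lc_seq_sys_def DH_sets_def lc_char[OF g d sV] using d sV tk by auto
  show ?thesis
  proof (intro conjI impI)
    show "is_lc_seq_sys V (DH_sets V E) vs \<longleftrightarrow> is_lc_seq_graph V E vs" by (rule P1)
  next
    assume lc: "is_lc_seq_graph V E vs"
    define Ek where "Ek = apply_lcc V E vs"
    define S where "S = set vs"
    have gk: "is_graph V Ek" unfolding Ek_def by (rule is_graph_apply[OF g])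
    have sys: "is_lc_seq_sys V (DH_sets V E) vs" using P1 lc by simp
    have SD: "S \<in> DH_sets V E"
      using sys unfolding is_lc_seq_sys_def S_def by (metis order_refl take_all)
    have main: "invertible_on (X \<union> S) (adj E) \<longleftrightarrow> invertible_on X (adj Ek)"
      if "X \<subseteq> V" "X \<inter> S = {}" for X
      unfolding S_def Ek_def by (rule lcc_main[OF g d sV lc]) (use that S_def in auto)
    have fs: "full_lc_seq_sys V (DH_sets V E) vs \<longleftrightarrow> (\<forall>Y\<in>DH_sets V E. S \<subseteq> Y \<longrightarrow> Y = S)"
      unfolding full_lc_seq_sys_def using sys SD S_def by auto
    have fg: "full_lc_seq_graph V E vs \<longleftrightarrow> (\<forall>u\<in>V. \<forall>e\<in>Ek. u \<notin> e)"
      unfolding full_lc_seq_graph_def Ek_def using lc by simp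
    show "full_lc_seq_sys V (DH_sets V E) vs \<longleftrightarrow> full_lc_seq_graph V E vs"
      unfolding fs fg
    proof
      assume H: "\<forall>Y\<in>DH_sets V E. S \<subseteq> Y \<longrightarrow> Y = S"
      show "\<forall>u\<in>V. \<forall>e\<in>Ek. u \<notin> e"
      proof (rule ccontr)
        assume "\<not> (\<forall>u\<in>V. \<forall>e\<in>Ek. u \<notin> e)"
        then obtain e where e: "e \<in> Ek" by blast
        obtain X where X: "X \<noteq> {}" "X \<subseteq> e" "invertible_on X (adj Ek)"
          using edge_inv[OF gk e] by blast
        have eV: "e \<subseteq> V" using gk e unfolding is_graph_def by blast
        have XS: "X \<inter> S = {}" using X(2) e iso_seq[of _ vs V E] unfolding S_def Ek_def by blast
        have XV: "X \<subseteq> V" using X(2) eV by blast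
        have "invertible_on (X \<union> S) (adj E)" using main[OF XV XS] X(3) by simp
        moreover have "X \<union> S \<subseteq> V" using XV sV S_def by blast
        ultimately have "X \<union> S \<in> DH_sets V E" unfolding DH_sets_def by blast
        then have "X \<union> S = S" using H by blast
        then show False using X(1) XS by blast
      qed
    next
      assume H: "\<forall>u\<in>V. \<forall>e\<in>Ek. u \<notin> e"
      have Ek0: "Ek = {}"
      proof (rule ccontr)
        assume "Ek \<noteq> {}"
        then obtain e where e: "e \<in> Ek" by blast
        have "e \<subseteq> V" "card e = 1 \<or> card e = 2" using gk e unfolding is_graph_def by auto
        then have "e \<noteq> {}" by auto
        then obtain u where "u \<in> e" by blast
        then show False using H e \<open>e \<subseteq> V\<close> by blast
      qed
      show "\<forall>Y\<in>DH_sets V E. S \<subseteq> Y \<longrightarrow> Y = S"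
      proof (intro ballI impI)
        fix Y assume Y: "Y \<in> DH_sets V E" and SY: "S \<subseteq> Y"
        define X where "X = Y - S"
        have XV: "X \<subseteq> V" using Y unfolding DH_sets_def X_def by auto
        have XS: "X \<inter> S = {}" unfolding X_def by auto
        have YX: "Y = X \<union> S" using SY unfolding X_def by auto
        have "invertible_on X (adj Ek)" using main[OF XV XS] Y YX unfolding DH_sets_def by simp
        then obtain B where B: "\<forall>i\<in>X. \<forall>j\<in>X. (\<Sum>k\<in>X. adj Ek i k * B k j) = (if i = j then 1 else 0)"
          unfolding invertible_on_def by blast
        have "X = {}"
        proof (rule ccontr)
          assume "X \<noteq> {}"
          then obtain x where x: "x \<in> X" by blast
          have "(\<Sum>k\<in>X. adj Ek x k * B k x) = 1" using B x by simp
          moreover have "(\<Sum>k\<in>X. adj Ek x k * B k x) = 0" using Ek0 by (simp add: adj_def)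
          ultimately show False by simp
        qed
        then show "Y = S" using YX by simp
      qed
    qed
  qed
qed

end
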